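(* Let $\Gamma_a(V)$ be the augmented Dynkin graph of $V$. (i) If $u,v$ are monomials such that $p_{ij}=p_{ji}=1$ for all $x_i\in\mu(u)$, $x_j\in\mu(v)$ with $i\neq j$, then $[u,v]^-=0$. (ii) Let $m\ge2$, $h_1,\dots,h_m\in\{x_1,\dots,x_n\}$ and $u=h_1\cdots h_m$. If either $|\mu(u)|=1$ or the subgraph of $\Gamma_a(V)$ induced on $\{i:x_i\in\mu(u)\}$ is disconnected, then $\sigma(h_1,\dots,h_m)=0$ for every full bracketing $\sigma$ of $h_1,\dots,h_m$ (in this order) by $[\,,\,]^-$.
   Context: $V$ is a braided vector space of diagonal type over an algebraically closed field of characteristic $0$ with basis $x_1,\dots,x_n$, braiding $C(x_i\otimes x_j)=q_{ij}x_j\otimes x_i$, Nichols algebra $\mathfrak{B}(V)$; $p_{ij}:=q_{ij}$. $[a,b]^-:=ab-ba$. The augmented Dynkin graph $\Gamma_a(V)$ has vertex set $\{1,\dots,n\}$ and an (undirected) edge $\{i,j\}$, $i\neq j$, iff $p_{ij}\neq1$ or $p_{ji}\neq1$. Monomials are words in $x_1,\dots,x_n$ viewed in $\mathfrak{B}(V)$; $\mu(u)$ is the set of letters of $u$. *)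

theory Defs
  imports "HOL-Combinatorics.Permutations" "HOL-Computational_Algebra.Polynomial"
begin

(* Letters x_1..x_n are encoded as natural numbers 0..<n; a word is a nat list.
   Elements of the tensor algebra T(V) are coefficient functions on words. *)
type_synonym 'k tens = "nat list \<Rightarrow> 'k"

definition mono :: "nat list \<Rightarrow> 'k::comm_ring_1 tens" where
  "mono u = (\<lambda>w. if w = u then 1 else 0)"

definition tmul :: "'k::comm_ring_1 tens \<Rightarrow> 'k tens \<Rightarrow> 'k tens" where
  "tmul f g = (\<lambda>w. \<Sum>k\<le>length w. f (take k w) * g (drop k w))"

definition comm_minus :: "'k::comm_ring_1 tens \<Rightarrow> 'k tens \<Rightarrow> 'k tens" where
  "comm_minus f g = (\<lambda>w. tmul f g w - tmul g f w)"

(* scalar of the Matsumoto lift of sigma acting on the word w for the diagonal braiding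
   c(x_i \<otimes> x_j) = q_ij x_j \<otimes> x_i : product of q_{w_a w_b} over inversions a<b, sigma a > sigma b *)
definition braid_char :: "(nat \<Rightarrow> nat \<Rightarrow> 'k::comm_ring_1) \<Rightarrow> nat list \<Rightarrow> (nat \<Rightarrow> nat) \<Rightarrow> 'k" where
  "braid_char q w \<sigma> = (\<Prod>p\<in>{(a,b). a < b \<and> b < length w \<and> \<sigma> b < \<sigma> a}. q (w ! fst p) (w ! snd p))"

(* quantum symmetrizer Omega_n = sum over S_n of Matsumoto lifts, applied degreewise;
   M(sigma) sends w to braid_char q w sigma * w', where w' ! (sigma a) = w ! a. *)
definition symmetrizer :: "(nat \<Rightarrow> nat \<Rightarrow> 'k::comm_ring_1) \<Rightarrow> 'k tens \<Rightarrow> 'k tens" where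
  "symmetrizer q f = (\<lambda>v. \<Sum>\<sigma>\<in>{\<sigma>. \<sigma> permutes {..<length v}}.
      (let w = map (\<lambda>a. v ! (\<sigma> a)) [0..<length v] in braid_char q w \<sigma> * f w))"

(* f represents 0 in the Nichols algebra B(V) = T(V) / (\<oplus>_n ker Omega_n) *)
definition nichols_zero :: "(nat \<Rightarrow> nat \<Rightarrow> 'k::comm_ring_1) \<Rightarrow> 'k tens \<Rightarrow> bool" where
  "nichols_zero q f \<longleftrightarrow> (\<forall>v. symmetrizer q f v = 0)"

datatype bracketing = BLeaf nat | BNode bracketing bracketing

fun bleaves :: "bracketing \<Rightarrow> nat list" where
  "bleaves (BLeaf i) = [i]"
| "bleaves (BNode a b) = bleaves a @ bleaves b"

fun beval :: "bracketing \<Rightarrow> 'k::comm_ring_1 tens" where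
  "beval (BLeaf i) = mono [i]"
| "beval (BNode a b) = comm_minus (beval a) (beval b)"

definition dynkin_edge :: "(nat \<Rightarrow> nat \<Rightarrow> 'k::one) \<Rightarrow> nat \<Rightarrow> nat \<Rightarrow> bool" where
  "dynkin_edge q i j \<longleftrightarrow> i \<noteq> j \<and> (q i j \<noteq> 1 \<or> q j i \<noteq> 1)"

definition induced_connected :: "(nat \<Rightarrow> nat \<Rightarrow> 'k::one) \<Rightarrow> nat set \<Rightarrow> bool" where
  "induced_connected q S \<longleftrightarrow>
     (\<forall>i\<in>S. \<forall>j\<in>S. (i, j) \<in> {(a, b). a \<in> S \<and> b \<in> S \<and> dynkin_edge q a b}\<^sup>*)"

end

theory Submission
  imports Defs
begin


lemma tmul_add_r: "tmul f (\<lambda>x. g x + h x) = (\<lambda>x. tmul f g x + tmul f h x)"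
  by (auto simp: tmul_def sum.distrib algebra_simps)
lemma tmul_add_l: "tmul (\<lambda>x. g x + h x) f = (\<lambda>x. tmul g f x + tmul h f x)"
  by (auto simp: tmul_def sum.distrib algebra_simps)
lemma tmul_smult_r: "tmul f (\<lambda>x. c * g x) = (\<lambda>x. c * tmul f g x)"
  by (auto simp: tmul_def sum_distrib_left algebra_simps)
lemma tmul_smult_l: "tmul (\<lambda>x. c * g x) f = (\<lambda>x. c * tmul g f x)"
  by (auto simp: tmul_def sum_distrib_left algebra_simps)
lemma tmul_diff_r: "tmul f (\<lambda>x. g x - h x) = (\<lambda>x. tmul f g x - tmul f h x)"
  by (auto simp: tmul_def sum_subtractf algebra_simps)
lemma tmul_diff_l: "tmul (\<lambda>x. g x - h x) f = (\<lambda>x. tmul g f x - tmul h f x)"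
  by (auto simp: tmul_def sum_subtractf algebra_simps)
lemma tmul_zero_r: "tmul f (\<lambda>_. 0) = (\<lambda>_. 0)"
  by (auto simp: tmul_def)
lemma tmul_zero_l: "tmul (\<lambda>_. 0) f = (\<lambda>_. 0)"
  by (auto simp: tmul_def)

lemma mono_mul: "tmul (mono u) (mono v) = (mono (u@v) :: 'k::comm_ring_1 tens)"
proof
  fix w
  have eq: "(take k w = u \<and> drop k w = v) \<longleftrightarrow> (k = length u \<and> w = u @ v)" if k: "k \<le> length w" for k
  proof
    assume h: "take k w = u \<and> drop k w = v"
    hence "w = u @ v" by (metis append_take_drop_id)
    moreover have "length u = k" using h k by auto
    ultimately show "k = length u \<and> w = u @ v" by simp
  next
    assume "k = length u \<and> w = u @ v"
    thus "take k w = u \<and> drop k w = v" by simp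
  qed
  have "\<And>k. k \<in> {..length w} \<Longrightarrow> (mono u (take k w) * mono v (drop k w) :: 'k)
        = (if k = length u then (if w = u @ v then 1 else 0) else 0)"
  proof -
    fix k assume "k \<in> {..length w}"
    hence k: "k \<le> length w" by simp
    have "(mono u (take k w) * mono v (drop k w) :: 'k) = (if take k w = u \<and> drop k w = v then 1 else 0)"
      by (simp add: mono_def)
    also have "\<dots> = (if k = length u \<and> w = u @ v then 1 else 0)" using eq[OF k] by simp
    finally show "(mono u (take k w) * mono v (drop k w) :: 'k)
        = (if k = length u then (if w = u @ v then 1 else 0) else 0)" by simp
  qed
  hence "tmul (mono u) (mono v) w = (\<Sum>k\<in>{..length w}. (if k = length u then (if w = u @ v then 1 else 0) else 0) :: 'k)"
    unfolding tmul_def by (rule sum.cong[OF refl])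
  also have "\<dots> = (if length u \<in> {..length w} then (if w = u @ v then 1 else 0) else 0)"
    by (rule sum.delta) simp
  also have "\<dots> = mono (u@v) w"
    by (auto simp: mono_def)
  finally show "tmul (mono u) (mono v) w = (mono (u@v) w :: 'k)" .
qed

lemma comm_self: "comm_minus f f = (\<lambda>_. 0)"
  by (simp add: comm_minus_def)
lemma comm_zero_l: "comm_minus (\<lambda>_. 0) f = (\<lambda>_. 0)"
  by (simp add: comm_minus_def tmul_zero_l tmul_zero_r)
lemma comm_zero_r: "comm_minus f (\<lambda>_. 0) = (\<lambda>_. 0)"
  by (simp add: comm_minus_def tmul_zero_l tmul_zero_r)



definition tc :: "(nat \<Rightarrow> nat \<Rightarrow> 'k::comm_ring_1) \<Rightarrow> nat \<Rightarrow> nat \<Rightarrow> bool" where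
  "tc q a b \<longleftrightarrow> q a b = 1 \<and> q b a = 1"

inductive sstep :: "(nat \<Rightarrow> nat \<Rightarrow> 'k::comm_ring_1) \<Rightarrow> nat list \<Rightarrow> nat list \<Rightarrow> bool" for q where
  "tc q a b \<Longrightarrow> sstep q (xs @ a # b # ys) (xs @ b # a # ys)"

lemma sstep_cong: "sstep q w w' \<Longrightarrow> sstep q (us @ w @ vs) (us @ w' @ vs)"
proof (induction rule: sstep.induct)
  case (1 a b xs ys)
  then show ?case using sstep.intros[of q a b "us @ xs" "ys @ vs"] by simp
qed

lemma seq_cong: "(sstep q)\<^sup>*\<^sup>* w w' \<Longrightarrow> (sstep q)\<^sup>*\<^sup>* (us @ w @ vs) (us @ w' @ vs)"
proof (induction rule: rtranclp_induct)
  case base then show ?case by simp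
next
  case (step y z) then show ?case by (meson rtranclp.rtrancl_into_rtrancl sstep_cong)
qed

lemma seq_letter: "\<forall>d\<in>set u. c = d \<or> tc q c d \<Longrightarrow> (sstep q)\<^sup>*\<^sup>* (c # u) (u @ [c])"
proof (induction u)
  case Nil then show ?case by simp
next
  case (Cons d u)
  have 1: "(sstep q)\<^sup>*\<^sup>* (c # d # u) (d # c # u)"
  proof (cases "c = d")
    case True then show ?thesis by simp
  next
    case False
    hence "tc q c d" using Cons.prems by auto
    then show ?thesis using sstep.intros[of q c d "[]" u] by auto
  qed
  have "(sstep q)\<^sup>*\<^sup>* ([d] @ (c # u) @ []) ([d] @ (u @ [c]) @ [])"
    by (rule seq_cong) (use Cons in auto)
  with 1 show ?case by simp
qed

lemma seq_swap: "\<forall>c\<in>set v. \<forall>d\<in>set u. c = d \<or> tc q c d \<Longrightarrow> (sstep q)\<^sup>*\<^sup>* (v @ u) (u @ v)"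
proof (induction v)
  case Nil then show ?case by simp
next
  case (Cons c v)
  have 1: "(sstep q)\<^sup>*\<^sup>* ([c] @ (v @ u) @ []) ([c] @ (u @ v) @ [])"
    by (rule seq_cong) (use Cons in auto)
  have 2: "(sstep q)\<^sup>*\<^sup>* ([] @ (c # u) @ v) ([] @ (u @ [c]) @ v)"
    by (rule seq_cong, rule seq_letter) (use Cons in auto)
  from 1 2 show ?case by simp
qed

inductive Z :: "(nat \<Rightarrow> nat \<Rightarrow> 'k::comm_ring_1) \<Rightarrow> 'k tens \<Rightarrow> bool" for q where
  Z0: "Z q (\<lambda>_. 0)"
| ZS: "Z q f \<Longrightarrow> (sstep q)\<^sup>*\<^sup>* w w' \<Longrightarrow> Z q (\<lambda>x. f x + c * (mono w x - mono w' x))"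

inductive Fs :: "nat set \<Rightarrow> 'k::comm_ring_1 tens \<Rightarrow> bool" for A where
  F0: "Fs A (\<lambda>_. 0)"
| FS: "Fs A f \<Longrightarrow> set w \<subseteq> A \<Longrightarrow> Fs A (\<lambda>x. f x + c * mono w x)"

lemma Z_add: "Z q g \<Longrightarrow> Z q f \<Longrightarrow> Z q (\<lambda>x. f x + g x)"
proof (induction rule: Z.induct)
  case Z0 then show ?case by simp
next
  case (ZS g w w' c)
  have "Z q (\<lambda>x. (f x + g x) + c * (mono w x - mono w' x))" using ZS by (intro Z.ZS) auto
  then show ?case by (simp add: add.assoc)
qed

lemma Z_smult: "Z q f \<Longrightarrow> Z q (\<lambda>x. c * f x)"
proof (induction rule: Z.induct)
  case Z0 then show ?case by (simp add: Z.Z0)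
next
  case (ZS f w w' d)
  have "Z q (\<lambda>x. c * f x + (c * d) * (mono w x - mono w' x))" using ZS by (intro Z.ZS) auto
  then show ?case by (simp add: algebra_simps)
qed

lemma Z_diff: "Z q f \<Longrightarrow> Z q g \<Longrightarrow> Z q (\<lambda>x. f x - g x)"
  using Z_add[OF Z_smult[of q g "-1"], of f] by simp

lemma Z_mono_l: "Z q f \<Longrightarrow> Z q (tmul (mono u) f)"
proof (induction rule: Z.induct)
  case Z0 then show ?case by (simp add: tmul_zero_r Z.Z0)
next
  case (ZS f w w' c)
  have "Z q (\<lambda>x. tmul (mono u) f x + c * (mono (u @ w) x - mono (u @ w') x))"
    using ZS seq_cong[of q w w' u "[]"] by (intro Z.ZS) auto
  then show ?case by (simp add: tmul_add_r tmul_smult_r tmul_diff_r mono_mul)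
qed

lemma Z_mono_r: "Z q f \<Longrightarrow> Z q (tmul f (mono u))"
proof (induction rule: Z.induct)
  case Z0 then show ?case by (simp add: tmul_zero_l Z.Z0)
next
  case (ZS f w w' c)
  have "Z q (\<lambda>x. tmul f (mono u) x + c * (mono (w @ u) x - mono (w' @ u) x))"
    using ZS seq_cong[of q w w' "[]" u] by (intro Z.ZS) auto
  then show ?case by (simp add: tmul_add_l tmul_smult_l tmul_diff_l mono_mul)
qed

lemma Z_tmul_l: "Fs A g \<Longrightarrow> Z q f \<Longrightarrow> Z q (tmul g f)"
proof (induction rule: Fs.induct)
  case F0 then show ?case by (simp add: tmul_zero_l Z.Z0)
next
  case (FS g w c)
  then show ?case by (simp add: tmul_add_l tmul_smult_l Z_add Z_smult Z_mono_l)
qed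

lemma Z_tmul_r: "Fs A g \<Longrightarrow> Z q f \<Longrightarrow> Z q (tmul f g)"
proof (induction rule: Fs.induct)
  case F0 then show ?case by (simp add: tmul_zero_r Z.Z0)
next
  case (FS g w c)
  then show ?case by (simp add: tmul_add_r tmul_smult_r Z_add Z_smult Z_mono_r)
qed

lemma Z_comm_l: "Z q f \<Longrightarrow> Fs A g \<Longrightarrow> Z q (comm_minus f g)"
  unfolding comm_minus_def by (intro Z_diff Z_tmul_l Z_tmul_r)
lemma Z_comm_r: "Z q f \<Longrightarrow> Fs A g \<Longrightarrow> Z q (comm_minus g f)"
  unfolding comm_minus_def by (intro Z_diff Z_tmul_l Z_tmul_r)

definition cross :: "(nat \<Rightarrow> nat \<Rightarrow> 'k::comm_ring_1) \<Rightarrow> nat set \<Rightarrow> nat set \<Rightarrow> bool" where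
  "cross q A B \<longleftrightarrow> (\<forall>c\<in>A. \<forall>d\<in>B. c = d \<or> tc q c d)"

lemma Z_cross_mono: "Fs B g \<Longrightarrow> cross q A B \<Longrightarrow> set u \<subseteq> A \<Longrightarrow>
   Z q (\<lambda>x. tmul (mono u) g x - tmul g (mono u) x)"
proof (induction rule: Fs.induct)
  case F0 then show ?case by (simp add: tmul_zero_l tmul_zero_r Z.Z0)
next
  case (FS g v c)
  have sw: "(sstep q)\<^sup>*\<^sup>* (u @ v) (v @ u)"
    by (rule seq_swap) (use FS.prems FS.hyps in \<open>auto simp: cross_def tc_def\<close>)
  have "Z q (\<lambda>x. (tmul (mono u) g x - tmul g (mono u) x) + c * (mono (u @ v) x - mono (v @ u) x))"
    using FS sw by (intro Z.ZS) auto
  moreover have "(\<lambda>x. tmul (mono u) (\<lambda>a. g a + c * mono v a) x - tmul (\<lambda>a. g a + c * mono v a) (mono u) x)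
     = (\<lambda>x. (tmul (mono u) g x - tmul g (mono u) x) + c * (mono (u @ v) x - mono (v @ u) x))"
    by (simp only: tmul_add_l tmul_add_r tmul_smult_l tmul_smult_r mono_mul) (simp add: fun_eq_iff right_diff_distrib)
  ultimately show ?case by simp
qed

lemma Z_cross: "Fs A f \<Longrightarrow> Fs B g \<Longrightarrow> cross q A B \<Longrightarrow> Z q (comm_minus f g)"
proof (induction rule: Fs.induct)
  case F0 then show ?case by (simp add: comm_zero_l Z.Z0)
next
  case (FS f u c)
  have "Z q (\<lambda>x. comm_minus f g x + c * (tmul (mono u) g x - tmul g (mono u) x))"
    using FS by (intro Z_add Z_smult Z_cross_mono) auto
  moreover have "comm_minus (\<lambda>a. f a + c * mono u a) g
     = (\<lambda>x. comm_minus f g x + c * (tmul (mono u) g x - tmul g (mono u) x))"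
    unfolding comm_minus_def
    by (simp only: tmul_add_l tmul_add_r tmul_smult_l tmul_smult_r) (simp add: fun_eq_iff right_diff_distrib)
  ultimately show ?case by simp
qed

lemma Fs_mono_set: "Fs A f \<Longrightarrow> A \<subseteq> B \<Longrightarrow> Fs B f"
  by (induction rule: Fs.induct) (auto intro: Fs.intros)

lemma Fs_add: "Fs A g \<Longrightarrow> Fs A f \<Longrightarrow> Fs A (\<lambda>x. f x + g x)"
proof (induction rule: Fs.induct)
  case F0 then show ?case by simp
next
  case (FS g w c)
  have "Fs A (\<lambda>x. (f x + g x) + c * mono w x)" using FS by (intro Fs.FS) auto
  then show ?case by (simp add: add.assoc)
qed

lemma Fs_smult: "Fs A f \<Longrightarrow> Fs A (\<lambda>x. c * f x)"
proof (induction rule: Fs.induct)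
  case F0 then show ?case by (simp add: Fs.F0)
next
  case (FS f w d)
  have "Fs A (\<lambda>x. c * f x + (c * d) * mono w x)" using FS by (intro Fs.FS) auto
  then show ?case by (simp add: algebra_simps)
qed

lemma Fs_mono_l: "Fs B g \<Longrightarrow> set u \<subseteq> A \<Longrightarrow> Fs (A \<union> B) (tmul (mono u) g)"
proof (induction rule: Fs.induct)
  case F0 then show ?case by (simp add: tmul_zero_r Fs.F0)
next
  case (FS g w c)
  have "Fs (A \<union> B) (\<lambda>x. tmul (mono u) g x + c * mono (u @ w) x)" using FS by (intro Fs.FS) auto
  then show ?case by (simp add: tmul_add_r tmul_smult_r mono_mul)
qed

lemma Fs_tmul: "Fs A f \<Longrightarrow> Fs B g \<Longrightarrow> Fs (A \<union> B) (tmul f g)"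
proof (induction rule: Fs.induct)
  case F0 then show ?case by (simp add: tmul_zero_l Fs.F0)
next
  case (FS f u c)
  then show ?case by (simp add: tmul_add_l tmul_smult_l Fs_add Fs_smult Fs_mono_l)
qed

lemma Fs_comm: "Fs A f \<Longrightarrow> Fs B g \<Longrightarrow> Fs (A \<union> B) (comm_minus f g)"
proof -
  assume a: "Fs A f" "Fs B g"
  have "Fs (A \<union> B) (\<lambda>x. tmul f g x + (-1) * tmul g f x)"
    using Fs_tmul[OF a] Fs_tmul[OF a(2) a(1)] by (intro Fs_add Fs_smult) (auto simp: Un_commute)
  then show ?thesis by (simp add: comm_minus_def)
qed

lemma Fs_beval: "Fs (set (bleaves t)) (beval t)"
proof (induction t)
  case (BLeaf i)
  have "Fs {i} (\<lambda>x. (\<lambda>_. 0) x + 1 * mono [i] x)" by (intro Fs.intros) auto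
  then show ?case by simp
next
  case (BNode a b)
  then show ?case by (simp add: Fs_comm)
qed




lemma braid_char_sq: "braid_char q w \<sigma> =
  (\<Prod>p\<in>{..<length w} \<times> {..<length w}. if fst p < snd p \<and> \<sigma> (snd p) < \<sigma> (fst p) then q (w ! fst p) (w ! snd p) else 1)"
proof -
  have "{(a,b). a < b \<and> b < length w \<and> \<sigma> b < \<sigma> a} =
     {p \<in> {..<length w} \<times> {..<length w}. fst p < snd p \<and> \<sigma> (snd p) < \<sigma> (fst p)}" by auto
  then show ?thesis unfolding braid_char_def by (simp add: prod.inter_filter)
qed

lemma tau_order:
  fixes i e f :: nat
  assumes "(e, f) \<noteq> (i, Suc i)" "(e, f) \<noteq> (Suc i, i)"
  shows "(transpose i (Suc i) e < transpose i (Suc i) f) \<longleftrightarrow> e < f"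
  using assms by (auto simp: transpose_def)

lemma sum_perm_comp:
  fixes F :: "(nat \<Rightarrow> nat) \<Rightarrow> 'k::comm_ring_1"
  assumes tp: "\<tau> permutes S" and tt: "\<And>k. \<tau> (\<tau> k) = k"
  shows "sum F {\<sigma>. \<sigma> permutes S} = sum (\<lambda>\<sigma>. F (\<sigma> \<circ> \<tau>)) {\<sigma>. \<sigma> permutes S}"
proof -
  let ?P = "{\<sigma>. \<sigma> permutes S}"
  have c: "\<sigma> \<circ> \<tau> \<circ> \<tau> = \<sigma>" for \<sigma> :: "nat \<Rightarrow> nat" by (simp add: fun_eq_iff tt)
  have inj: "inj_on (\<lambda>\<sigma>. \<sigma> \<circ> \<tau>) ?P"
    by (rule inj_onI) (metis c)
  have im: "(\<lambda>\<sigma>. \<sigma> \<circ> \<tau>) ` ?P = ?P"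
  proof
    show "(\<lambda>\<sigma>. \<sigma> \<circ> \<tau>) ` ?P \<subseteq> ?P" using permutes_compose[OF tp] by auto
    show "?P \<subseteq> (\<lambda>\<sigma>. \<sigma> \<circ> \<tau>) ` ?P"
    proof
      fix \<sigma> assume "\<sigma> \<in> ?P"
      hence "\<sigma> \<circ> \<tau> \<in> ?P" using permutes_compose[OF tp] by auto
      moreover have "\<sigma> = (\<sigma> \<circ> \<tau>) \<circ> \<tau>" using c by simp
      ultimately show "\<sigma> \<in> (\<lambda>\<sigma>. \<sigma> \<circ> \<tau>) ` ?P" by blast
    qed
  qed
  have "sum F ?P = sum F ((\<lambda>\<sigma>. \<sigma> \<circ> \<tau>) ` ?P)" using im by simp
  also have "\<dots> = sum (F \<circ> (\<lambda>\<sigma>. \<sigma> \<circ> \<tau>)) ?P" by (rule sum.reindex[OF inj])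
  finally show ?thesis by (simp add: o_def)
qed

lemma sym_swap:
  fixes q :: "nat \<Rightarrow> nat \<Rightarrow> 'k::comm_ring_1"
  assumes tc: "tc q a b"
  shows "symmetrizer q (mono (xs @ a # b # ys)) v = symmetrizer q (mono (xs @ b # a # ys)) v"
proof -
  define x where "x = xs @ a # b # ys"
  define x' where "x' = xs @ b # a # ys"
  define m where "m = length v"
  define i where "i = length xs"
  define \<tau> where "\<tau> = transpose i (Suc i)"
  define W where "W = (\<lambda>\<sigma>::nat\<Rightarrow>nat. map (\<lambda>a. v ! \<sigma> a) [0..<m])"
  define P where "P = {\<sigma>. \<sigma> permutes {..<m}}"
  have symf: "symmetrizer q (mono y) v = (\<Sum>\<sigma>\<in>P. braid_char q (W \<sigma>) \<sigma> * mono y (W \<sigma>))" for y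
    unfolding symmetrizer_def P_def W_def m_def Let_def by simp
  show ?thesis
  proof (cases "m = length x")
    case False
    have "length x' = length x" unfolding x_def x'_def by simp
    hence "mono x (W \<sigma>) = (0::'k)" "mono x' (W \<sigma>) = (0::'k)" for \<sigma>
      using False unfolding mono_def W_def by auto
    then show ?thesis unfolding x_def[symmetric] x'_def[symmetric] symf by simp
  next
    case True
    have im: "Suc i < m" using True unfolding x_def i_def by simp
    have ttm: "\<tau> (\<tau> k) = k" for k unfolding \<tau>_def by simp
    have tlt: "k < m \<Longrightarrow> \<tau> k < m" for k unfolding \<tau>_def using im by (auto simp: transpose_def)
    have tp: "\<tau> permutes {..<m}" unfolding \<tau>_def using im by (intro permutes_swap_id) auto
    have lx: "length x = m" "length x' = m" using True unfolding x_def x'_def by auto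
    have xx': "k < m \<Longrightarrow> x' ! k = x ! (\<tau> k)" for k
    proof -
      assume k: "k < m"
      consider "k < i" | "k = i" | "k = Suc i" | "Suc i < k" by linarith
      then show ?thesis
      proof cases
        case 1 then show ?thesis unfolding x_def x'_def \<tau>_def i_def by (simp add: nth_append)
      next
        case 2 then show ?thesis unfolding x_def x'_def \<tau>_def i_def by (simp add: nth_append)
      next
        case 3 then show ?thesis unfolding x_def x'_def \<tau>_def i_def by (simp add: nth_append)
      next
        case 4
        define j where "j = k - Suc (Suc i)"
        have j: "k = Suc (Suc i) + j" using 4 unfolding j_def by simp
        then show ?thesis unfolding x_def x'_def \<tau>_def i_def by (simp add: nth_append)
      qed
    qed
    have WW: "k < m \<Longrightarrow> W (\<sigma> \<circ> \<tau>) ! k = W \<sigma> ! (\<tau> k)" for \<sigma> k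
      unfolding W_def using tlt by simp
    have lW: "length (W \<sigma>) = m" for \<sigma> unfolding W_def by simp
    have Weq: "W (\<sigma> \<circ> \<tau>) = x' \<longleftrightarrow> W \<sigma> = x" for \<sigma>
    proof
      assume h: "W (\<sigma> \<circ> \<tau>) = x'"
      show "W \<sigma> = x"
      proof (rule nth_equalityI)
        show "length (W \<sigma>) = length x" using lW lx by simp
        fix k assume "k < length (W \<sigma>)"
        hence k: "k < m" using lW by simp
        have "W (\<sigma> \<circ> \<tau>) ! (\<tau> k) = x' ! (\<tau> k)" using h by simp
        thus "W \<sigma> ! k = x ! k" using WW[OF tlt[OF k]] xx'[OF tlt[OF k]] ttm by simp
      qed
    next
      assume h: "W \<sigma> = x"
      show "W (\<sigma> \<circ> \<tau>) = x'"
        by (rule nth_equalityI) (use h lW lx WW xx' in auto)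
    qed
    have qab: "q a b = 1" "q b a = 1" using tc unfolding tc_def by auto
    have xi: "x ! i = a" "x ! Suc i = b" unfolding x_def i_def by (auto simp: nth_append)
    have trm: "braid_char q (W (\<sigma> \<circ> \<tau>)) (\<sigma> \<circ> \<tau>) * mono x' (W (\<sigma> \<circ> \<tau>))
              = braid_char q (W \<sigma>) \<sigma> * mono x (W \<sigma>)" if sp: "\<sigma> \<in> P" for \<sigma>
    proof (cases "W \<sigma> = x")
      case False
      then show ?thesis using Weq[of \<sigma>] by (simp add: mono_def)
    next
      case True
      hence W': "W (\<sigma> \<circ> \<tau>) = x'" using Weq by simp
      define S where "S = {..<m} \<times> {..<m}"
      define H where "H = (\<lambda>p. if \<tau> (fst p) < \<tau> (snd p) \<and> \<sigma> (snd p) < \<sigma> (fst p) then q (x ! fst p) (x ! snd p) else (1::'k))"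
      have "braid_char q x' (\<sigma> \<circ> \<tau>) =
        (\<Prod>p\<in>S. if fst p < snd p \<and> (\<sigma> \<circ> \<tau>) (snd p) < (\<sigma> \<circ> \<tau>) (fst p) then q (x' ! fst p) (x' ! snd p) else 1)"
        unfolding braid_char_sq S_def lx ..
      also have "\<dots> = (\<Prod>p\<in>S. H (\<tau> (fst p), \<tau> (snd p)))"
        by (rule prod.cong[OF refl]) (auto simp: S_def H_def ttm xx')
      also have "\<dots> = (\<Prod>p\<in>S. H p)"
        by (rule prod.reindex_bij_witness[where i = "\<lambda>p. (\<tau> (fst p), \<tau> (snd p))" and j = "\<lambda>p. (\<tau> (fst p), \<tau> (snd p))"])
           (auto simp: S_def ttm tlt)
      also have "\<dots> = (\<Prod>p\<in>S. if fst p < snd p \<and> \<sigma> (snd p) < \<sigma> (fst p) then q (x ! fst p) (x ! snd p) else 1)"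
      proof (rule prod.cong[OF refl])
        fix p assume "p \<in> S"
        obtain e f where p: "p = (e, f)" by (cases p)
        show "H p = (if fst p < snd p \<and> \<sigma> (snd p) < \<sigma> (fst p) then q (x ! fst p) (x ! snd p) else 1)"
        proof (cases "(e, f) = (i, Suc i) \<or> (e, f) = (Suc i, i)")
          case True
          then show ?thesis unfolding H_def p using xi qab by auto
        next
          case False
          then have "(\<tau> e < \<tau> f) \<longleftrightarrow> e < f" unfolding \<tau>_def by (intro tau_order) auto
          then show ?thesis unfolding H_def p by simp
        qed
      qed
      also have "\<dots> = braid_char q x \<sigma>"
        unfolding braid_char_sq S_def lx ..
      finally show ?thesis using True W' by (simp add: mono_def)
    qed
    have "symmetrizer q (mono x') v = (\<Sum>\<sigma>\<in>P. braid_char q (W \<sigma>) \<sigma> * mono x' (W \<sigma>))" by (rule symf)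
    also have "\<dots> = (\<Sum>\<sigma>\<in>P. braid_char q (W (\<sigma> \<circ> \<tau>)) (\<sigma> \<circ> \<tau>) * mono x' (W (\<sigma> \<circ> \<tau>)))"
      unfolding P_def
      by (rule sum_perm_comp[where F = "\<lambda>\<sigma>. braid_char q (W \<sigma>) \<sigma> * mono x' (W \<sigma>)", OF tp ttm])
    also have "\<dots> = (\<Sum>\<sigma>\<in>P. braid_char q (W \<sigma>) \<sigma> * mono x (W \<sigma>))"
      by (rule sum.cong[OF refl]) (rule trm)
    also have "\<dots> = symmetrizer q (mono x) v" by (rule symf[symmetric])
    finally have "symmetrizer q (mono x') v = symmetrizer q (mono x) v" .
    then show ?thesis unfolding x_def x'_def by (rule sym)
  qed
qed



lemma sym_lin: "symmetrizer q (\<lambda>x. f x + c * (g x - h x)) v =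
   symmetrizer q f v + c * (symmetrizer q g v - symmetrizer q h v)"
  unfolding symmetrizer_def Let_def
  by (simp add: sum.distrib sum_distrib_left sum_subtractf algebra_simps)

lemma sym_zero: "symmetrizer q (\<lambda>_. 0) v = 0"
  unfolding symmetrizer_def by simp

lemma sym_seq:
  assumes sw: "\<And>a b xs ys v. tc q a b \<Longrightarrow> symmetrizer q (mono (xs @ a # b # ys)) v = symmetrizer q (mono (xs @ b # a # ys)) v"
  shows "(sstep q)\<^sup>*\<^sup>* w w' \<Longrightarrow> symmetrizer q (mono w) v = symmetrizer q (mono w') v"
proof (induction rule: rtranclp_induct)
  case base then show ?case by simp
next
  case (step y z)
  from step(2) have "symmetrizer q (mono y) v = symmetrizer q (mono z) v"
  proof cases
    case (1 a b xs ys) then show ?thesis using sw[of a b xs ys v] by simp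
  qed
  with step(3) show ?case by simp
qed

lemma Z_nz:
  assumes sw: "\<And>a b xs ys v. tc q a b \<Longrightarrow> symmetrizer q (mono (xs @ a # b # ys)) v = symmetrizer q (mono (xs @ b # a # ys)) v"
  shows "Z q f \<Longrightarrow> nichols_zero q f"
proof (induction rule: Z.induct)
  case Z0 then show ?case by (simp add: nichols_zero_def sym_zero)
next
  case (ZS f w w' c)
  then show ?case using sym_seq[OF sw, of w w'] by (simp add: nichols_zero_def sym_lin)
qed

lemma comm_two:
  assumes "f = (\<lambda>_. 0) \<or> f = mono [c]" "g = (\<lambda>_. 0) \<or> g = mono [c]"
  shows "comm_minus f g = (\<lambda>_. 0)"
proof -
  from assms(1) show ?thesis
  proof
    assume "f = (\<lambda>_. 0)" then show ?thesis using comm_zero_l by simp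
  next
    assume f: "f = mono [c]"
    from assms(2) show ?thesis
    proof
      assume "g = (\<lambda>_. 0)" then show ?thesis using comm_zero_r by simp
    next
      assume "g = mono [c]" then show ?thesis using f comm_self by simp
    qed
  qed
qed

lemma single_beval: "set (bleaves t) \<subseteq> {c} \<Longrightarrow> (beval t :: 'k::comm_ring_1 tens) = (\<lambda>_. 0) \<or> (beval t :: 'k tens) = mono [c]"
proof (induction t)
  case (BLeaf i)
  hence "i = c" by simp
  hence "beval (BLeaf i) = (mono [c] :: 'k tens)" by (simp only: beval.simps)
  then show ?case by (rule disjI2)
next
  case (BNode a b)
  have la: "set (bleaves a) \<subseteq> {c}" and lb: "set (bleaves b) \<subseteq> {c}" using BNode.prems by auto
  have "comm_minus (beval a) (beval b) = (\<lambda>_. 0::'k)"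
    by (rule comm_two[OF BNode.IH(1)[OF la] BNode.IH(2)[OF lb]])
  hence "beval (BNode a b) = (\<lambda>_. 0::'k)" by (simp only: beval.simps)
  then show ?case by (rule disjI1)
qed

lemma bleaves_ne: "bleaves t \<noteq> []"
  by (induction t) auto

lemma cross_sym: assumes "cross q A B" shows "cross q B A"
  unfolding cross_def
proof (intro ballI)
  fix c d assume "c \<in> B" "d \<in> A"
  hence "d = c \<or> tc q d c" using assms unfolding cross_def by simp
  thus "c = d \<or> tc q c d" unfolding tc_def by auto
qed

lemma side: "L \<subseteq> A \<union> B \<Longrightarrow> \<not> (L \<inter> A \<noteq> {} \<and> L \<inter> B \<noteq> {}) \<Longrightarrow> L \<subseteq> A \<or> L \<subseteq> B"
  by blast

lemma Z_disc:
  assumes cr: "cross q A B" and dj: "A \<inter> B = {}"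
  shows "set (bleaves t) \<subseteq> A \<union> B \<Longrightarrow> set (bleaves t) \<inter> A \<noteq> {} \<Longrightarrow> set (bleaves t) \<inter> B \<noteq> {}
     \<Longrightarrow> Z q (beval t)"
proof (induction t)
  case (BLeaf i) then show ?case using dj by auto
next
  case (BNode a b)
  let ?La = "set (bleaves a)" and ?Lb = "set (bleaves b)"
  have sa: "?La \<subseteq> A \<union> B" and sb: "?Lb \<subseteq> A \<union> B" using BNode.prems by auto
  show ?case
  proof (cases "?La \<inter> A \<noteq> {} \<and> ?La \<inter> B \<noteq> {}")
    case True
    then have "Z q (beval a)" using BNode.IH(1) sa by blast
    then show ?thesis by (simp add: Z_comm_l[OF _ Fs_beval])
  next
    case F1: False
    show ?thesis
    proof (cases "?Lb \<inter> A \<noteq> {} \<and> ?Lb \<inter> B \<noteq> {}")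
      case True
      then have "Z q (beval b)" using BNode.IH(2) sb by blast
      then show ?thesis by (simp add: Z_comm_r[OF _ Fs_beval])
    next
      case F2: False
      have nea: "?La \<noteq> {}" and neb: "?Lb \<noteq> {}" using bleaves_ne by auto
      have ca: "?La \<subseteq> A \<or> ?La \<subseteq> B" using side[OF sa F1] .
      have cb: "?Lb \<subseteq> A \<or> ?Lb \<subseteq> B" using side[OF sb F2] .
      have pa: "(?La \<union> ?Lb) \<inter> A \<noteq> {}" and pb: "(?La \<union> ?Lb) \<inter> B \<noteq> {}"
        using BNode.prems(2,3) by simp_all
      have "(?La \<subseteq> A \<and> ?Lb \<subseteq> B) \<or> (?La \<subseteq> B \<and> ?Lb \<subseteq> A)"
        using ca cb pa pb dj by blast
      then show ?thesis
      proof
        assume h: "?La \<subseteq> A \<and> ?Lb \<subseteq> B"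
        show ?thesis using Z_cross[OF Fs_mono_set[OF Fs_beval] Fs_mono_set[OF Fs_beval] cr] h by simp
      next
        assume h: "?La \<subseteq> B \<and> ?Lb \<subseteq> A"
        show ?thesis using Z_cross[OF Fs_mono_set[OF Fs_beval] Fs_mono_set[OF Fs_beval] cross_sym[OF cr]] h by simp
      qed
    qed
  qed
qed

lemma disconnected_split:
  assumes "\<not> induced_connected q S"
  obtains A B where "cross q A B" "A \<inter> B = {}" "S \<subseteq> A \<union> B" "S \<inter> A \<noteq> {}" "S \<inter> B \<noteq> {}"
proof -
  define R where "R = {(a, b). a \<in> S \<and> b \<in> S \<and> dynkin_edge q a b}"
  have "\<not> (\<forall>i\<in>S. \<forall>j\<in>S. (i, j) \<in> R\<^sup>*)"
    using assms unfolding induced_connected_def R_def .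
  then obtain i j where ij: "i \<in> S" "j \<in> S" "(i, j) \<notin> R\<^sup>*"
    by blast
  define A where "A = {k \<in> S. (i, k) \<in> R\<^sup>*}"
  define B where "B = S - A"
  have cr: "cross q A B"
    unfolding cross_def
  proof (intro ballI)
    fix c d assume c: "c \<in> A" and d: "d \<in> B"
    show "c = d \<or> tc q c d"
    proof (rule ccontr)
      assume "\<not> (c = d \<or> tc q c d)"
      hence e: "dynkin_edge q c d" unfolding dynkin_edge_def tc_def by auto
      have cS: "c \<in> S" "(i, c) \<in> R\<^sup>*" using c unfolding A_def by auto
      have dS: "d \<in> S" "d \<notin> A" using d unfolding B_def by auto
      have "(c, d) \<in> R" unfolding R_def using cS(1) dS(1) e by simp
      hence "(i, d) \<in> R\<^sup>*" by (rule rtrancl_into_rtrancl[OF cS(2)])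
      hence "d \<in> A" unfolding A_def using dS(1) by simp
      thus False using dS(2) by simp
    qed
  qed
  have d1: "A \<inter> B = {}" unfolding B_def by blast
  have d2: "S \<subseteq> A \<union> B" unfolding A_def B_def by blast
  have iA: "i \<in> S \<inter> A" using ij(1) unfolding A_def by simp
  have jB: "j \<in> S \<inter> B" using ij unfolding A_def B_def by simp
  have d3: "S \<inter> A \<noteq> {}" using iA by blast
  have d4: "S \<inter> B \<noteq> {}" using jB by blast
  show ?thesis by (rule that[OF cr d1 d2 d3 d4])
qed

theorem proposition6p5:
  fixes q :: "nat \<Rightarrow> nat \<Rightarrow> 'k::field_char_0" and n :: nat
  assumes alg_closed: "\<And>p :: 'k poly. degree p \<ge> 1 \<Longrightarrow> \<exists>x. poly p x = 0"
    and q_nz: "\<And>i j. i < n \<Longrightarrow> j < n \<Longrightarrow> q i j \<noteq> 0"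
  shows "(\<forall>u v. set u \<subseteq> {..<n} \<longrightarrow> set v \<subseteq> {..<n} \<longrightarrow>
            (\<forall>i\<in>set u. \<forall>j\<in>set v. i \<noteq> j \<longrightarrow> q i j = 1 \<and> q j i = 1) \<longrightarrow>
            nichols_zero q (comm_minus (mono u) (mono v)))
       \<and> (\<forall>hs t. length hs \<ge> 2 \<longrightarrow> set hs \<subseteq> {..<n} \<longrightarrow> bleaves t = hs \<longrightarrow>
            (card (set hs) = 1 \<or> \<not> induced_connected q (set hs)) \<longrightarrow>
            nichols_zero q (beval t))"
proof -
  have sw: "\<And>a b xs ys v. tc q a b \<Longrightarrow> symmetrizer q (mono (xs @ a # b # ys)) v = symmetrizer q (mono (xs @ b # a # ys)) v"
    by (rule sym_swap)
  have nz0: "nichols_zero q (\<lambda>_. 0::'k)" by (simp add: nichols_zero_def sym_zero)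
  have P1: "nichols_zero q (comm_minus (mono u) (mono v :: 'k tens))"
    if h: "\<forall>i\<in>set u. \<forall>j\<in>set v. i \<noteq> j \<longrightarrow> q i j = 1 \<and> q j i = 1" for u v
  proof -
    have hh: "\<forall>c\<in>set u. \<forall>d\<in>set v. c = d \<or> tc q c d"
    proof (intro ballI)
      fix c d assume cd: "c \<in> set u" "d \<in> set v"
      show "c = d \<or> tc q c d"
      proof (cases "c = d")
        case True then show ?thesis by simp
      next
        case False
        then have "q c d = 1 \<and> q d c = 1" using h cd by simp
        then show ?thesis unfolding tc_def by simp
      qed
    qed
    have s: "(sstep q)\<^sup>*\<^sup>* (u @ v) (v @ u)" by (rule seq_swap[OF hh])
    have ZZ: "Z q (\<lambda>x. (\<lambda>_. 0::'k) x + 1 * (mono (u @ v) x - mono (v @ u) x))"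
      by (rule Z.ZS[OF Z.Z0 s])
    have eq: "comm_minus (mono u) (mono v) = (\<lambda>x. (\<lambda>_. 0::'k) x + 1 * (mono (u @ v) x - mono (v @ u) x))"
      by (simp add: comm_minus_def mono_mul)
    show ?thesis unfolding eq by (rule Z_nz[OF sw ZZ])
  qed
  have P2: "nichols_zero q (beval t :: 'k tens)"
    if h1: "length hs \<ge> 2" and h2: "bleaves t = hs" and h3: "card (set hs) = 1 \<or> \<not> induced_connected q (set hs)" for hs t
  proof (cases "card (set hs) = 1")
    case True
    then obtain c where c: "set hs = {c}" by (rule card_1_singletonE)
    show ?thesis
    proof (cases t)
      case (BLeaf i)
      then have "hs = [i]" using h2 by simp
      then have "length hs = 1" by simp
      then show ?thesis using h1 by simp
    next
      case (BNode a b)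
      have e: "hs = bleaves a @ bleaves b" using h2 BNode by simp
      have "set (bleaves a) \<union> set (bleaves b) = {c}" using c unfolding e by simp
      hence la: "set (bleaves a) \<subseteq> {c}" and lb: "set (bleaves b) \<subseteq> {c}" by blast+
      have "comm_minus (beval a) (beval b) = (\<lambda>_. 0::'k)"
        by (rule comm_two[OF single_beval[OF la] single_beval[OF lb]])
      hence "beval t = (\<lambda>_. 0::'k)" using BNode by (simp only: beval.simps)
      then show ?thesis using nz0 by simp
    qed
  next
    case False
    hence "\<not> induced_connected q (set hs)" using h3 by simp
    then obtain A B where cr: "cross q A B" and dj: "A \<inter> B = {}" and s1: "set hs \<subseteq> A \<union> B"
        and s2: "set hs \<inter> A \<noteq> {}" and s3: "set hs \<inter> B \<noteq> {}"
      by (rule disconnected_split)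
    have ZT: "Z q (beval t :: 'k tens)"
      by (rule Z_disc[OF cr dj]) (use h2 s1 s2 s3 in simp_all)
    show ?thesis by (rule Z_nz[OF sw ZT])
  qed
  show ?thesis
  proof (intro conjI allI impI)
    fix u v :: "nat list"
    assume "\<forall>i\<in>set u. \<forall>j\<in>set v. i \<noteq> j \<longrightarrow> q i j = 1 \<and> q j i = 1"
    then show "nichols_zero q (comm_minus (mono u) (mono v))" by (rule P1)
  next
    fix hs t
    assume a: "2 \<le> length hs" "set hs \<subseteq> {..<n}" "bleaves t = hs"
      "card (set hs) = 1 \<or> \<not> induced_connected q (set hs)"
    show "nichols_zero q (beval t)" by (rule P2[OF a(1) a(3) a(4)])
  qed
qed
end
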